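(* Let $J\subseteq[n]$. If $\pi,\hat\pi\in S_J$ are joined by an edge of the bridge polytope $\mathrm{Br}_J$, then there exists a transposition $(i\,\ell)$ such that $\hat\pi=(i\,\ell)\pi$.
   Context: For $J\subseteq[n]$, $S_J=\{\pi\in S_n:\ \pi(j)\ge j \text{ for } j\in J,\ \pi(j)\le j \text{ for } j\notin J\}$ and $\mathrm{Br}_J=\operatorname{conv}\{(\pi(1),\dots,\pi(n)):\pi\in S_J\}\subset\mathbb{R}^n$, each $\pi\in S_J$ being identified with the vertex $(\pi(1),\dots,\pi(n))$. For a transposition $(i\,\ell)$, $(i\,\ell)\pi$ denotes $(i\,\ell)\circ\pi$, the permutation obtained from $\pi$ by swapping the values $i$ and $\ell$. *)

theory Defs
  imports "HOL-Analysis.Analysis" "HOL-Combinatorics.Transposition"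
begin

text \<open>The ground set [n] is modelled by a finite linearly ordered index type 'n
  (so n = CARD('n)); position j has rank pos j in 1..n.\<close>

definition pos :: "'n::{finite,linorder} \<Rightarrow> nat" where
  "pos j = card {k. k \<le> j}"

definition S_J :: "'n::{finite,linorder} set \<Rightarrow> ('n::{finite,linorder} \<Rightarrow> 'n) set" where
  "S_J J = {\<pi>. \<pi> permutes UNIV \<and> (\<forall>j\<in>J. j \<le> \<pi> j) \<and> (\<forall>j. j \<notin> J \<longrightarrow> \<pi> j \<le> j)}"

definition pvec :: "('n::{finite,linorder} \<Rightarrow> 'n) \<Rightarrow> real ^ ('n::{finite,linorder})" where
  "pvec \<pi> = (\<chi> j. real (pos (\<pi> j)))"

definition Br :: "'n::{finite,linorder} set \<Rightarrow> (real ^ ('n::{finite,linorder})) set" where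
  "Br J = convex hull (pvec ` S_J J)"

definition joined_by_edge :: "(real ^ 'n::finite) set \<Rightarrow> real ^ 'n \<Rightarrow> real ^ 'n \<Rightarrow> bool" where
  "joined_by_edge P p q \<longleftrightarrow> p \<noteq> q \<and> closed_segment p q face_of P"

end

theory Submission
  imports Defs
begin

lemma pos_strict: "pos a < pos b" if "(a::'n::{finite,linorder}) < b"
proof -
  have "b \<notin> {k. k \<le> a}" using that by auto
  moreover have "{k. k \<le> a} \<subseteq> {k. k \<le> b}" using that by auto
  moreover have "b \<in> {k. k \<le> b}" by auto
  ultimately have "{k. k \<le> a} \<subset> {k. k \<le> b}" by blast
  thus ?thesis unfolding pos_def by (rule psubset_card_mono[rotated]) simp
qed

lemma pos_le_iff: "pos (a::'n::{finite,linorder}) \<le> pos b \<longleftrightarrow> a \<le> b"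
  by (cases a b rule: linorder_cases) (auto dest: pos_strict)

lemma pos_eq_iff: "pos (a::'n::{finite,linorder}) = pos b \<longleftrightarrow> a = b"
  by (metis antisym order_refl pos_le_iff)

lemma pos_less_iff: "pos (a::'n::{finite,linorder}) < pos b \<longleftrightarrow> a < b"
  by (cases a b rule: linorder_cases) (auto dest: pos_strict)

lemma SJ_perm: "\<sigma> \<in> S_J J \<Longrightarrow> \<sigma> permutes UNIV" by (simp add: S_J_def)
lemma SJ_J: "\<sigma> \<in> S_J J \<Longrightarrow> j \<in> J \<Longrightarrow> j \<le> \<sigma> j" by (simp add: S_J_def)
lemma SJ_N: "\<sigma> \<in> S_J J \<Longrightarrow> j \<notin> J \<Longrightarrow> \<sigma> j \<le> j" by (simp add: S_J_def)

definition fw :: "real ^ ('n::{finite,linorder}) \<Rightarrow> ('n \<Rightarrow> 'n) \<Rightarrow> real" where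
  "fw w \<sigma> = (\<Sum>j\<in>UNIV. w$j * real (pos (\<sigma> j)))"

lemma fw_inner: "fw w \<sigma> = w \<bullet> pvec \<sigma>"
  by (simp add: fw_def inner_vec_def pvec_def)

lemma fw_levels: "fw w \<sigma> = (\<Sum>k\<in>UNIV. \<Sum>j\<in>{j. j \<in> UNIV \<and> k \<le> \<sigma> j}. w$j)"
proof -
  have "fw w \<sigma> = (\<Sum>j\<in>UNIV. \<Sum>k\<in>{k. k \<in> UNIV \<and> k \<le> \<sigma> j}. w$j)"
    by (simp add: fw_def pos_def mult.commute)
  also have "\<dots> = (\<Sum>k\<in>UNIV. \<Sum>j\<in>{j. j \<in> UNIV \<and> k \<le> \<sigma> j}. w$j)"
    by (rule sum.swap_restrict) auto
  finally show ?thesis .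
qed

lemma swap_SJ:
  assumes "\<pi> \<in> S_J J" "\<pi> q < \<pi> p" "p \<in> J \<longrightarrow> p \<le> \<pi> q" "q \<notin> J \<longrightarrow> \<pi> p \<le> q"
  shows "Transposition.transpose (\<pi> p) (\<pi> q) \<circ> \<pi> \<in> S_J J"
proof -
  have perm: "\<pi> permutes UNIV" using assms(1) by (simp add: S_J_def)
  have inj: "inj \<pi>" using perm permutes_inj by blast
  have pq: "p \<noteq> q" using assms(2) by auto
  let ?s = "Transposition.transpose (\<pi> p) (\<pi> q) \<circ> \<pi>"
  have sp: "?s p = \<pi> q" and sq: "?s q = \<pi> p" by auto
  have so: "?s j = \<pi> j" if "j \<noteq> p" "j \<noteq> q" for j
    using that inj by (auto simp: inj_eq intro!: transpose_apply_other)
  have "?s permutes UNIV" by (rule permutes_compose[OF perm permutes_swap_id]) auto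
  moreover have "\<forall>j\<in>J. j \<le> ?s j"
  proof
    fix j assume j: "j \<in> J"
    show "j \<le> ?s j"
    proof (cases "j = p")
      case True thus ?thesis using assms j sp by auto
    next
      case False
      show ?thesis
      proof (cases "j = q")
        case True thus ?thesis using assms j sq SJ_J[OF assms(1) j] by auto
      next
        case False thus ?thesis using \<open>j \<noteq> p\<close> so SJ_J[OF assms(1) j] by auto
      qed
    qed
  qed
  moreover have "\<forall>j. j \<notin> J \<longrightarrow> ?s j \<le> j"
  proof (intro allI impI)
    fix j assume j: "j \<notin> J"
    show "?s j \<le> j"
    proof (cases "j = p")
      case True thus ?thesis using assms j sp SJ_N[OF assms(1) j] by auto
    next
      case False
      show ?thesis
      proof (cases "j = q")
        case True thus ?thesis using assms j sq by auto
      next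
        case False thus ?thesis using \<open>j \<noteq> p\<close> so SJ_N[OF assms(1) j] by auto
      qed
    qed
  qed
  ultimately show ?thesis by (simp add: S_J_def)
qed

lemma fw_swap:
  assumes "\<pi> permutes UNIV" "p \<noteq> q"
  shows "fw w (Transposition.transpose (\<pi> p) (\<pi> q) \<circ> \<pi>) - fw w \<pi>
         = (w$q - w$p) * (real (pos (\<pi> p)) - real (pos (\<pi> q)))"
proof -
  have inj: "inj \<pi>" using assms permutes_inj by blast
  let ?s = "Transposition.transpose (\<pi> p) (\<pi> q) \<circ> \<pi>"
  have so: "?s j = \<pi> j" if "j \<noteq> p" "j \<noteq> q" for j
    using that inj by (auto simp: inj_eq intro!: transpose_apply_other)
  have "fw w ?s - fw w \<pi> = (\<Sum>j\<in>UNIV. w$j * real (pos (?s j)) - w$j * real (pos (\<pi> j)))"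
    by (simp add: fw_def sum_subtractf)
  also have "\<dots> = (\<Sum>j\<in>{p,q}. w$j * real (pos (?s j)) - w$j * real (pos (\<pi> j)))"
    by (rule sum.mono_neutral_right) (use so in force)+
  also have "\<dots> = (w$q - w$p) * (real (pos (\<pi> p)) - real (pos (\<pi> q)))"
    using assms(2) by (simp add: algebra_simps)
  finally show ?thesis .
qed

definition Fr :: "'n::{finite,linorder} set \<Rightarrow> 'n \<Rightarrow> 'n \<Rightarrow> bool" where
  "Fr J k p \<longleftrightarrow> (p \<in> J \<and> p < k) \<or> (p \<notin> J \<and> k \<le> p)"

lemma sep:
  fixes w :: "real ^ ('n::{finite,linorder})"
  assumes pi: "\<pi> \<in> S_J J"
    and opt: "\<And>\<sigma>. \<sigma> \<in> S_J J \<Longrightarrow> fw w \<sigma> \<le> fw w \<pi>"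
    and noVS: "\<And>p q. \<pi> q < \<pi> p \<Longrightarrow> (p \<in> J \<longrightarrow> p \<le> \<pi> q) \<Longrightarrow> (q \<notin> J \<longrightarrow> \<pi> p \<le> q) \<Longrightarrow> w$p \<noteq> w$q"
  shows "k \<le> \<pi> p \<Longrightarrow> \<not> k \<le> \<pi> q \<Longrightarrow> Fr J k p \<Longrightarrow> Fr J k q \<Longrightarrow> w$q < w$p"
proof -
  have perm: "\<pi> permutes UNIV" using pi by (simp add: S_J_def)
  have piJ: "\<And>j. j \<in> J \<Longrightarrow> j \<le> \<pi> j" using SJ_J[OF pi] .
  have piN: "\<And>j. j \<notin> J \<Longrightarrow> \<pi> j \<le> j" using SJ_N[OF pi] .
  have inv1: "\<And>x. \<pi> (inv \<pi> x) = x" using permutes_inverses(1)[OF perm] .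
  have "\<forall>p q k. pos (\<pi> p) - pos (\<pi> q) = d \<longrightarrow> k \<le> \<pi> p \<longrightarrow> \<not> k \<le> \<pi> q \<longrightarrow> Fr J k p \<longrightarrow> Fr J k q \<longrightarrow> w$q < w$p" for d
  proof (induction d rule: less_induct)
    case (less d)
    have IH: "\<And>p q k. pos (\<pi> p) - pos (\<pi> q) < d \<Longrightarrow> k \<le> \<pi> p \<Longrightarrow> \<not> k \<le> \<pi> q \<Longrightarrow> Fr J k p \<Longrightarrow> Fr J k q \<Longrightarrow> w$q < w$p"
      using less.IH by blast
    show ?case
    proof (intro allI impI)
      fix p q k
      assume d: "pos (\<pi> p) - pos (\<pi> q) = d" and kp: "k \<le> \<pi> p" and kq: "\<not> k \<le> \<pi> q"
        and Fp: "Fr J k p" and Fq: "Fr J k q"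
      have qp: "\<pi> q < \<pi> p" using kp kq by auto
      show "w$q < w$p"
      proof (cases "p \<in> J \<and> \<not> p \<le> \<pi> q")
        case True
        hence pJ: "p \<in> J" and qlp: "\<pi> q < p" by auto
        have pk: "p < k" using Fp pJ by (auto simp: Fr_def)
        define r where "r = inv \<pi> p"
        have rp: "\<pi> r = p" by (simp add: r_def inv1)
        have plt: "p < \<pi> p" using pk kp by auto
        have rnp: "r \<noteq> p" using rp plt by auto
        define k1 where "k1 = (if r \<in> J then \<pi> p else min r (\<pi> p))"
        have prr: "r \<notin> J \<Longrightarrow> p < r" using piN[of r] rp rnp by auto
        have k1a: "\<not> k1 \<le> \<pi> r" using prr plt by (auto simp: k1_def rp min_le_iff_disj)
        have k1b: "k1 \<le> \<pi> p" by (auto simp: k1_def)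
        have F1p: "Fr J k1 p" using pJ prr plt by (auto simp: Fr_def k1_def min_le_iff_disj)
        have F1r: "Fr J k1 r" using piJ[of r] rp plt by (auto simp: Fr_def k1_def min_le_iff_disj)
        have d1: "pos (\<pi> p) - pos (\<pi> r) < d"
          using d rp pos_strict[OF qlp] pos_strict[OF plt] by auto
        have w1: "w$r < w$p" using IH[OF d1 k1b k1a F1p F1r] .
        have Frr: "Fr J p r" using piJ[of r] piN[of r] rp rnp by (auto simp: Fr_def)
        have Fqq: "Fr J p q" using Fq pk piJ[of q] qlp by (auto simp: Fr_def)
        have d2: "pos (\<pi> r) - pos (\<pi> q) < d"
          using d rp pos_strict[OF qlp] pos_strict[OF plt] by auto
        have w2: "w$q < w$r" using IH[OF d2 _ _ Frr Fqq] rp qlp by auto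
        show ?thesis using w1 w2 by simp
      next
        case A: False
        show ?thesis
        proof (cases "q \<notin> J \<and> \<not> \<pi> p \<le> q")
          case True
          hence qN: "q \<notin> J" and qlp: "q < \<pi> p" by auto
          have kq': "k \<le> q" using Fq qN by (auto simp: Fr_def)
          have pqq: "\<pi> q < q" using kq kq' by auto
          define r where "r = inv \<pi> q"
          have rq: "\<pi> r = q" by (simp add: r_def inv1)
          have rnq: "r \<noteq> q" using rq pqq by auto
          define k1 where "k1 = (if r \<in> J then \<pi> p else min r (\<pi> p))"
          have qrr: "r \<notin> J \<Longrightarrow> q < r" using piN[of r] rq rnq by auto
          have k1a: "\<not> k1 \<le> \<pi> r" using qrr qlp by (auto simp: k1_def rq min_le_iff_disj)
          have k1b: "k1 \<le> \<pi> p" by (auto simp: k1_def)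
          have F1p: "Fr J k1 p" using Fp kq' qlp qrr piN[of p] by (auto simp: Fr_def k1_def min_le_iff_disj)
          have F1r: "Fr J k1 r" using piJ[of r] rq qlp by (auto simp: Fr_def k1_def min_le_iff_disj)
          have d1: "pos (\<pi> p) - pos (\<pi> r) < d"
            using d rq pos_strict[OF pqq] pos_strict[OF qlp] by auto
          have w1: "w$r < w$p" using IH[OF d1 k1b k1a F1p F1r] .
          have Frr: "Fr J q r" using piJ[of r] piN[of r] rq rnq by (auto simp: Fr_def)
          have Fqq: "Fr J q q" using qN by (auto simp: Fr_def)
          have d2: "pos (\<pi> r) - pos (\<pi> q) < d"
            using d rq pos_strict[OF pqq] pos_strict[OF qlp] by auto
          have w2: "w$q < w$r" using IH[OF d2 _ _ Frr Fqq] rq pqq by auto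
          show ?thesis using w1 w2 by simp
        next
          case False
          have v1: "p \<in> J \<longrightarrow> p \<le> \<pi> q" using A by auto
          have v2: "q \<notin> J \<longrightarrow> \<pi> p \<le> q" using False by auto
          have pq: "p \<noteq> q" using qp by auto
          have "fw w (Transposition.transpose (\<pi> p) (\<pi> q) \<circ> \<pi>) \<le> fw w \<pi>"
            by (rule opt[OF swap_SJ[OF pi qp v1 v2]])
          hence "(w$q - w$p) * (real (pos (\<pi> p)) - real (pos (\<pi> q))) \<le> 0"
            using fw_swap[OF perm pq, of w] by linarith
          moreover have "real (pos (\<pi> p)) - real (pos (\<pi> q)) > 0"
            using pos_strict[OF qp] by simp
          ultimately have "w$q \<le> w$p" by (simp add: mult_le_0_iff)
          moreover have "w$p \<noteq> w$q" by (rule noVS[OF qp v1 v2])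
          ultimately show ?thesis by simp
        qed
      qed
    qed
  qed
  thus "k \<le> \<pi> p \<Longrightarrow> \<not> k \<le> \<pi> q \<Longrightarrow> Fr J k p \<Longrightarrow> Fr J k q \<Longrightarrow> w$q < w$p" by blast
qed

lemma card_level:
  assumes "\<sigma> permutes (UNIV::'n::{finite,linorder} set)"
  shows "card {j. k \<le> \<sigma> j} = card {i::'n. k \<le> i}"
proof -
  have "bij_betw \<sigma> {j. k \<le> \<sigma> j} {i. k \<le> i}"
  proof (rule bij_betw_imageI)
    show "inj_on \<sigma> {j. k \<le> \<sigma> j}" using permutes_inj[OF assms] inj_on_subset subset_UNIV by blast
    have inv1: "\<And>x. \<sigma> (inv \<sigma> x) = x" using permutes_inverses(1)[OF assms] .
    show "\<sigma> ` {j. k \<le> \<sigma> j} = {i. k \<le> i}"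
    proof
      show "\<sigma> ` {j. k \<le> \<sigma> j} \<subseteq> {i. k \<le> i}" by auto
      show "{i. k \<le> i} \<subseteq> \<sigma> ` {j. k \<le> \<sigma> j}"
      proof
        fix i assume "i \<in> {i. k \<le> i}"
        then have "inv \<sigma> i \<in> {j. k \<le> \<sigma> j}" using inv1 by simp
        then show "i \<in> \<sigma> ` {j. k \<le> \<sigma> j}" by (rule image_eqI[rotated]) (simp add: inv1)
      qed
    qed
  qed
  thus ?thesis by (rule bij_betw_same_card)
qed

lemma level_cmp:
  fixes w :: "real ^ ('n::{finite,linorder})"
  assumes pi: "\<pi> \<in> S_J J" and sg: "\<sigma> \<in> S_J J"
    and S: "\<And>k p q. k \<le> \<pi> p \<Longrightarrow> \<not> k \<le> \<pi> q \<Longrightarrow> Fr J k p \<Longrightarrow> Fr J k q \<Longrightarrow> w$q < w$p"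
  shows "(\<Sum>j\<in>{j. k \<le> \<sigma> j}. w$j) \<le> (\<Sum>j\<in>{j. k \<le> \<pi> j}. w$j)
       \<and> ((\<Sum>j\<in>{j. k \<le> \<sigma> j}. w$j) = (\<Sum>j\<in>{j. k \<le> \<pi> j}. w$j) \<longrightarrow> {j. k \<le> \<sigma> j} = {j. k \<le> \<pi> j})"
proof -
  define A where "A = {j. k \<le> \<pi> j}"
  define B where "B = {j. k \<le> \<sigma> j}"
  have cA: "card A = card B" unfolding A_def B_def
    using card_level[OF SJ_perm[OF pi]] card_level[OF SJ_perm[OF sg]] by simp
  have XY: "w$y < w$x" if x: "x \<in> A - B" and y: "y \<in> B - A" for x y
  proof (rule S)
    show "k \<le> \<pi> x" using x by (simp add: A_def)
    show "\<not> k \<le> \<pi> y" using y by (simp add: A_def)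
    have x1: "k \<le> \<pi> x" and x2: "\<not> k \<le> \<sigma> x" using x by (auto simp: A_def B_def)
    show "Fr J k x"
    proof (cases "x \<in> J")
      case True
      have "\<not> k \<le> x" using SJ_J[OF sg True] x2 order.trans by blast
      thus ?thesis using True by (simp add: Fr_def)
    next
      case False
      have "k \<le> x" using SJ_N[OF pi False] x1 order.trans by blast
      thus ?thesis using False by (simp add: Fr_def)
    qed
    have y1: "k \<le> \<sigma> y" and y2: "\<not> k \<le> \<pi> y" using y by (auto simp: A_def B_def)
    show "Fr J k y"
    proof (cases "y \<in> J")
      case True
      have "\<not> k \<le> y" using SJ_J[OF pi True] y2 order.trans by blast
      thus ?thesis using True by (simp add: Fr_def)
    next
      case False
      have "k \<le> y" using SJ_N[OF sg False] y1 order.trans by blast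
      thus ?thesis using False by (simp add: Fr_def)
    qed
  qed
  have cXY: "card (A - B) = card (B - A)"
  proof -
    have "card A = card (A \<inter> B) + card (A - B)" by (rule card_Int_Diff) simp
    moreover have "card B = card (B \<inter> A) + card (B - A)" by (rule card_Int_Diff) simp
    moreover have "B \<inter> A = A \<inter> B" by blast
    ultimately show ?thesis using cA by simp
  qed
  obtain g where g: "bij_betw g (A - B) (B - A)"
    using finite_same_card_bij[OF _ _ cXY] by auto
  have sBA: "(\<Sum>j\<in>B - A. w$j) = (\<Sum>x\<in>A - B. w$(g x))"
    using sum.reindex_bij_betw[OF g, of "\<lambda>j. w$j"] by simp
  have gl: "\<And>x. x \<in> A - B \<Longrightarrow> w$(g x) < w$x"
    using XY bij_betwE[OF g] by blast
  have le: "(\<Sum>x\<in>A - B. w$(g x)) \<le> (\<Sum>x\<in>A - B. w$x)"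
    by (rule sum_mono) (simp add: gl less_imp_le)
  have strict: "(\<Sum>x\<in>A - B. w$(g x)) < (\<Sum>x\<in>A - B. w$x)" if "A - B \<noteq> {}"
    using sum_strict_mono[of "A - B" "\<lambda>x. w$(g x)" "\<lambda>x. w$x"] gl that by simp
  have eA: "(\<Sum>j\<in>A. w$j) = (\<Sum>j\<in>A \<inter> B. w$j) + (\<Sum>j\<in>A - B. w$j)"
    by (rule sum.Int_Diff) simp
  have eB: "(\<Sum>j\<in>B. w$j) = (\<Sum>j\<in>A \<inter> B. w$j) + (\<Sum>j\<in>B - A. w$j)"
    using sum.Int_Diff[of B "\<lambda>j. w$j" A] by (simp add: Int_commute)
  have ee: "A - B = {} \<longleftrightarrow> B - A = {}" using cXY card_0_eq[of "A - B"] card_0_eq[of "B - A"] by simp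
  have fin: "B = A" if eq: "(\<Sum>j\<in>B. w$j) = (\<Sum>j\<in>A. w$j)"
  proof -
    have "A - B = {}"
    proof (rule ccontr)
      assume "A - B \<noteq> {}"
      from strict[OF this] eA eB sBA eq show False by linarith
    qed
    with ee show ?thesis by blast
  qed
  show ?thesis using le eA eB sBA fin unfolding A_def[symmetric] B_def[symmetric] by linarith
qed

lemma seg_swap:
  assumes pi: "\<pi> \<in> S_J J" and pi': "\<pi>' \<in> S_J J" and ne: "pvec \<pi> \<noteq> pvec \<pi>'"
    and pq: "\<pi> q \<noteq> \<pi> p"
    and seg: "pvec (Transposition.transpose (\<pi> p) (\<pi> q) \<circ> \<pi>) \<in> closed_segment (pvec \<pi>) (pvec \<pi>')"
  shows "\<pi>' = Transposition.transpose (\<pi> p) (\<pi> q) \<circ> \<pi>"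
proof -
  let ?s = "Transposition.transpose (\<pi> p) (\<pi> q) \<circ> \<pi>"
  have perm: "\<pi> permutes UNIV" and perm': "\<pi>' permutes UNIV" using pi pi' by (auto simp: S_J_def)
  have inj: "inj \<pi>" and inj': "inj \<pi>'" using perm perm' permutes_inj by blast+
  have p_ne_q: "p \<noteq> q" using pq by auto
  have sp: "?s p = \<pi> q" and sq: "?s q = \<pi> p" by auto
  have so: "?s j = \<pi> j" if "j \<noteq> p" "j \<noteq> q" for j
    using that inj by (auto simp: inj_eq intro!: transpose_apply_other)
  obtain u where u: "0 \<le> u" "u \<le> 1" and eq: "pvec ?s = (1 - u) *\<^sub>R pvec \<pi> + u *\<^sub>R pvec \<pi>'"
    using seg by (auto simp: closed_segment_def)
  have comp: "real (pos (?s j)) = (1 - u) * real (pos (\<pi> j)) + u * real (pos (\<pi>' j))" for j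
  proof -
    have "pvec ?s $ j = ((1 - u) *\<^sub>R pvec \<pi> + u *\<^sub>R pvec \<pi>') $ j" using eq by simp
    thus ?thesis by (simp add: pvec_def del: o_apply)
  qed
  have u0: "u \<noteq> 0"
  proof
    assume "u = 0"
    hence "real (pos (?s p)) = real (pos (\<pi> p))" using comp[of p] by simp
    hence "?s p = \<pi> p" using pos_eq_iff by (metis of_nat_eq_iff)
    thus False using sp pq by simp
  qed
  have oth: "\<pi>' j = \<pi> j" if "j \<noteq> p" "j \<noteq> q" for j
  proof -
    have "real (pos (\<pi> j)) = (1 - u) * real (pos (\<pi> j)) + u * real (pos (\<pi>' j))"
      using comp[of j] so[OF that] by simp
    hence "u * (real (pos (\<pi>' j)) - real (pos (\<pi> j))) = 0" by (simp add: algebra_simps) auto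
    hence "real (pos (\<pi>' j)) - real (pos (\<pi> j)) = 0" using u0 by (simp only: mult_eq_0_iff) blast
    hence "real (pos (\<pi>' j)) = real (pos (\<pi> j))" by linarith
    thus ?thesis using pos_eq_iff by (metis of_nat_eq_iff)
  qed
  have inv1: "\<And>x. \<pi> (inv \<pi> x) = x" using permutes_inverses(1)[OF perm] .
  have vals: "\<pi>' x \<in> {\<pi> p, \<pi> q}" if "x = p \<or> x = q" for x
  proof -
    define j0 where "j0 = inv \<pi> (\<pi>' x)"
    have j0: "\<pi> j0 = \<pi>' x" by (simp add: j0_def inv1)
    have "j0 = p \<or> j0 = q"
    proof (rule ccontr)
      assume "\<not> (j0 = p \<or> j0 = q)"
      hence "\<pi>' j0 = \<pi>' x" using oth j0 by auto
      hence "j0 = x" using inj' by (simp add: inj_eq)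
      thus False using that \<open>\<not> (j0 = p \<or> j0 = q)\<close> by auto
    qed
    thus ?thesis using j0 by auto
  qed
  have "\<pi>' p = \<pi> q"
  proof (rule ccontr)
    assume a: "\<pi>' p \<noteq> \<pi> q"
    hence a1: "\<pi>' p = \<pi> p" using vals[of p] by auto
    have "\<pi>' q \<noteq> \<pi>' p" using inj' p_ne_q by (simp add: inj_eq)
    hence a2: "\<pi>' q = \<pi> q" using vals[of q] a1 by auto
    have "\<pi>' = \<pi>"
    proof
      fix j show "\<pi>' j = \<pi> j" using a1 a2 oth by (cases "j = p \<or> j = q") auto
    qed
    thus False using ne by simp
  qed
  moreover have "\<pi>' q = \<pi> p"
  proof -
    have "\<pi>' q \<noteq> \<pi>' p" using inj' p_ne_q by (simp add: inj_eq)
    thus ?thesis using vals[of q] \<open>\<pi>' p = \<pi> q\<close> by auto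
  qed
  ultimately show ?thesis
  proof -
    assume e1: "\<pi>' p = \<pi> q" and e2: "\<pi>' q = \<pi> p"
    show ?thesis
    proof
      fix j show "\<pi>' j = ?s j"
        using e1 e2 sp sq oth so by (cases "j = p"; cases "j = q") auto
    qed
  qed
qed

theorem lemma4p4:
  fixes J :: "'n::{finite,linorder} set" and \<pi> \<pi>' :: "'n \<Rightarrow> 'n"
  assumes "\<pi> \<in> S_J J" and "\<pi>' \<in> S_J J"
    and "joined_by_edge (Br J) (pvec \<pi>) (pvec \<pi>')"
  shows "\<exists>i l. i \<noteq> l \<and> \<pi>' = Transposition.transpose i l \<circ> \<pi>"
proof -
  note pi = assms(1) and pi' = assms(2)
  have ne: "pvec \<pi> \<noteq> pvec \<pi>'" and face: "closed_segment (pvec \<pi>) (pvec \<pi>') face_of Br J"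
    using assms(3) by (auto simp: joined_by_edge_def)
  have fin: "finite (pvec ` S_J J)" by simp
  have poly: "polyhedron (Br J)" unfolding Br_def by (rule polyhedron_convex_hull[OF fin])
  have "closed_segment (pvec \<pi>) (pvec \<pi>') exposed_face_of Br J"
    using exposed_face_of_polyhedron[OF poly] face by simp
  then obtain a b where sub: "Br J \<subseteq> {x. a \<bullet> x \<le> b}"
    and Feq: "closed_segment (pvec \<pi>) (pvec \<pi>') = Br J \<inter> {x. a \<bullet> x = b}"
    by (auto simp: exposed_face_of_def)
  have inB: "pvec \<sigma> \<in> Br J" if "\<sigma> \<in> S_J J" for \<sigma>
    unfolding Br_def by (rule hull_inc) (use that in auto)
  have le: "fw a \<sigma> \<le> b" if "\<sigma> \<in> S_J J" for \<sigma>
    using sub inB[OF that] by (auto simp: fw_inner)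
  have "pvec \<pi> \<in> closed_segment (pvec \<pi>) (pvec \<pi>')" by simp
  hence fpi: "fw a \<pi> = b" using Feq by (auto simp: fw_inner)
  have "pvec \<pi>' \<in> closed_segment (pvec \<pi>) (pvec \<pi>')" by simp
  hence fpi': "fw a \<pi>' = b" using Feq by (auto simp: fw_inner)
  have opt: "fw a \<sigma> \<le> fw a \<pi>" if "\<sigma> \<in> S_J J" for \<sigma> using le[OF that] fpi by simp
  show ?thesis
  proof (rule ccontr)
    assume nc: "\<not> ?thesis"
    have noVS: "a$p \<noteq> a$q" if qp: "\<pi> q < \<pi> p" and v1: "p \<in> J \<longrightarrow> p \<le> \<pi> q"
      and v2: "q \<notin> J \<longrightarrow> \<pi> p \<le> q" for p q
    proof
      assume eqw: "a$p = a$q"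
      let ?s = "Transposition.transpose (\<pi> p) (\<pi> q) \<circ> \<pi>"
      have sJ: "?s \<in> S_J J" by (rule swap_SJ[OF pi qp v1 v2])
      have pq: "p \<noteq> q" using qp by auto
      have "fw a ?s - fw a \<pi> = 0" using fw_swap[OF SJ_perm[OF pi] pq, of a] eqw by simp
      hence "a \<bullet> pvec ?s = b" using fpi by (simp add: fw_inner)
      hence segm: "pvec ?s \<in> closed_segment (pvec \<pi>) (pvec \<pi>')" using Feq inB[OF sJ] by auto
      have "\<pi> q \<noteq> \<pi> p" using qp by auto
      hence "\<pi>' = ?s" by (rule seg_swap[OF pi pi' ne _ segm])
      moreover have "\<pi> p \<noteq> \<pi> q" using qp by auto
      ultimately show False using nc by blast
    qed
    have S: "\<And>k p q. k \<le> \<pi> p \<Longrightarrow> \<not> k \<le> \<pi> q \<Longrightarrow> Fr J k p \<Longrightarrow> Fr J k q \<Longrightarrow> a$q < a$p"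
      using sep[OF pi opt noVS] by blast
    let ?L = "\<lambda>\<sigma> k. (\<Sum>j\<in>{j. k \<le> \<sigma> j}. a$j)"
    have lc: "?L \<pi>' k \<le> ?L \<pi> k \<and> (?L \<pi>' k = ?L \<pi> k \<longrightarrow> {j. k \<le> \<pi>' j} = {j. k \<le> \<pi> j})" for k
      by (rule level_cmp[OF pi pi' S])
    have sums: "(\<Sum>k\<in>UNIV. ?L \<pi>' k) = (\<Sum>k\<in>UNIV. ?L \<pi> k)"
      using fw_levels[of a \<pi>] fw_levels[of a \<pi>'] fpi fpi' by simp
    have "(\<Sum>k\<in>UNIV. ?L \<pi> k - ?L \<pi>' k) = 0" using sums by (simp add: sum_subtractf)
    moreover have "\<forall>k\<in>UNIV. 0 \<le> ?L \<pi> k - ?L \<pi>' k" using lc by simp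
    ultimately have "\<forall>k\<in>UNIV. ?L \<pi> k - ?L \<pi>' k = 0" using sum_nonneg_eq_0_iff[of UNIV "\<lambda>k. ?L \<pi> k - ?L \<pi>' k"] by simp
    hence lev: "{j. k \<le> \<pi>' j} = {j. k \<le> \<pi> j}" for k using lc[of k] by simp
    have "\<pi>' = \<pi>"
    proof
      fix j
      have "j \<in> {i. \<pi>' j \<le> \<pi>' i}" by simp
      hence "\<pi>' j \<le> \<pi> j" using lev[of "\<pi>' j"] by blast
      moreover have "j \<in> {i. \<pi> j \<le> \<pi> i}" by simp
      hence "\<pi> j \<le> \<pi>' j" using lev[of "\<pi> j"] by blast
      ultimately show "\<pi>' j = \<pi> j" by simp
    qed
    thus False using ne by simp
  qed
qed

end
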